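(* Let $f,g:\mathbb{C}\to\mathbb{C}$ be entire functions with $f\circ g=g\circ f$, and suppose that $f$ and $g$ satisfy Property A. Then the bungee set $BU(f)$ is completely invariant under $g$, and $BU(g)$ is completely invariant under $f$.
   Context: For an entire function $h$, $h^n$ denotes the $n$-th iterate. Escaping set: $I(h)=\{z: h^n(z)\to\infty\}$. Filled-in Julia set: $K(h)=\{z: (h^n(z))_n \text{ bounded}\}$. Bungee set: $BU(h)=\mathbb{C}\setminus(I(h)\cup K(h))$, i.e. the set of $z$ whose orbit $(h^n(z))$ has a bounded subsequence and also a subsequence tending to $\infty$. A set $A$ is completely invariant under $\phi$ if $\phi(A)\subseteq A$ and $\phi^{-1}(A)\subseteq A$. Property A for the pair $(f,g)$: for every $z\in\mathbb{C}$ and every strictly increasing sequence $(n_k)$ with $|f^{n_k}(z)|\to\infty$, one has $|g(f^{n_k}(z))|\to\infty$; and symmetrically with the roles of $f$ and $g$ exchanged. *)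

theory Defs
  imports "HOL-Complex_Analysis.Complex_Analysis"
begin

definition escaping_set :: "(complex \<Rightarrow> complex) \<Rightarrow> complex set" where
  "escaping_set h = {z. filterlim (\<lambda>n. (h ^^ n) z) at_infinity sequentially}"

definition filled_julia_set :: "(complex \<Rightarrow> complex) \<Rightarrow> complex set" where
  "filled_julia_set h = {z. bounded (range (\<lambda>n. (h ^^ n) z))}"

definition bungee_set :: "(complex \<Rightarrow> complex) \<Rightarrow> complex set" where
  "bungee_set h = UNIV - (escaping_set h \<union> filled_julia_set h)"

definition completely_invariant :: "'a set \<Rightarrow> ('a \<Rightarrow> 'a) \<Rightarrow> bool" where
  "completely_invariant A \<phi> \<longleftrightarrow> \<phi> ` A \<subseteq> A \<and> \<phi> -` A \<subseteq> A"

definition property_A_one :: "(complex \<Rightarrow> complex) \<Rightarrow> (complex \<Rightarrow> complex) \<Rightarrow> bool" where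
  "property_A_one f g \<longleftrightarrow>
     (\<forall>z (n :: nat \<Rightarrow> nat). strict_mono n \<longrightarrow>
        filterlim (\<lambda>k. norm ((f ^^ n k) z)) at_top sequentially \<longrightarrow>
        filterlim (\<lambda>k. norm (g ((f ^^ n k) z))) at_top sequentially)"

definition property_A :: "(complex \<Rightarrow> complex) \<Rightarrow> (complex \<Rightarrow> complex) \<Rightarrow> bool" where
  "property_A f g \<longleftrightarrow> property_A_one f g \<and> property_A_one g f"

end

theory Submission
  imports Defs
begin

lemma unb_subseq:
  fixes s :: "nat \<Rightarrow> complex"
  assumes "\<not> bounded (range s)"
  shows "\<exists>r. strict_mono r \<and> filterlim (\<lambda>k. norm (s (r k))) at_top sequentially"
proof -
  have ex: "\<exists>n\<ge>m. norm (s n) > B" for B :: real and m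
  proof (rule ccontr)
    assume "\<not> ?thesis"
    hence le: "\<forall>n\<ge>m. norm (s n) \<le> B" by auto
    let ?M = "max B (Max ((\<lambda>n. norm (s n)) ` {..<m}))"
    have "\<forall>n. norm (s n) \<le> ?M"
    proof
      fix n show "norm (s n) \<le> ?M"
      proof (cases "n < m")
        case True
        hence "norm (s n) \<le> Max ((\<lambda>n. norm (s n)) ` {..<m})" by (intro Max_ge) auto
        thus ?thesis by linarith
      next
        case False hence "norm (s n) \<le> B" using le by simp
        thus ?thesis by linarith
      qed
    qed
    hence "bounded (range s)" unfolding bounded_iff by blast
    with assms show False by blast
  qed
  define r where "r = rec_nat (SOME n. norm (s n) > 0)
      (\<lambda>k rk. SOME n. n \<ge> Suc rk \<and> norm (s n) > real (Suc k))"
  have r0: "r 0 = (SOME n. norm (s n) > 0)" and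
       rS: "r (Suc k) = (SOME n. n \<ge> Suc (r k) \<and> norm (s n) > real (Suc k))" for k
    by (simp_all add: r_def)
  have p1: "r (Suc k) \<ge> Suc (r k) \<and> norm (s (r (Suc k))) > real (Suc k)" for k
    unfolding rS by (rule someI_ex) (use ex in blast)
  have p0: "norm (s (r 0)) > 0" unfolding r0 by (rule someI_ex) (use ex in blast)
  have big: "norm (s (r k)) > real k" for k
    using p0 p1 by (cases k) auto
  have sm: "strict_mono r"
    by (rule strict_monoI_Suc) (use p1 Suc_le_lessD in blast)
  have "filterlim (\<lambda>k. norm (s (r k))) at_top sequentially"
    by (rule filterlim_at_top_mono[OF filterlim_real_sequentially])
       (use big less_imp_le in \<open>simp add: less_imp_le\<close>)
  with sm show ?thesis by blast
qed

lemma iter_comm: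
  assumes "f \<circ> g = g \<circ> f"
  shows "(f ^^ n) (g z) = g ((f ^^ n) z)"
proof (induction n)
  case 0 then show ?case by simp
next
  case (Suc n)
  have "\<And>x. f (g x) = g (f x)" using assms by (metis comp_apply)
  then show ?case using Suc by simp
qed

lemma cont_bounded:
  fixes g :: "complex \<Rightarrow> complex"
  assumes "continuous_on UNIV g" "bounded (range s)"
  shows "bounded (range (\<lambda>n. g (s n)))"
proof -
  have "compact (closure (range s))" using assms(2) compact_closure by blast
  hence "compact (g ` closure (range s))"
    using assms(1) by (intro compact_continuous_image) (auto intro: continuous_on_subset)
  hence "bounded (g ` closure (range s))" by (rule compact_imp_bounded)
  moreover have "range (\<lambda>n. g (s n)) \<subseteq> g ` closure (range s)"
    using closure_subset by blast
  ultimately show ?thesis using bounded_subset by blast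
qed

lemma cont_not_esc:
  fixes g :: "complex \<Rightarrow> complex"
  assumes "continuous_on UNIV g"
    "\<not> filterlim (\<lambda>n. norm (s n)) at_top sequentially"
  shows "\<not> filterlim (\<lambda>n. norm (g (s n))) at_top sequentially"
proof -
  from assms(2) obtain B where "\<not> eventually (\<lambda>n. B \<le> norm (s n)) sequentially"
    unfolding filterlim_at_top by blast
  hence fr: "frequently (\<lambda>n. s n \<in> cball 0 B) sequentially"
    unfolding frequently_def by (smt (verit, ccfv_SIG) eventually_mono mem_cball_0)
  have "compact (g ` cball 0 B)"
    using assms(1) by (intro compact_continuous_image) (auto intro: continuous_on_subset)
  then obtain M where M: "\<forall>x\<in>cball 0 B. norm (g x) \<le> M"
    using compact_imp_bounded bounded_iff by (metis image_eqI)
  have "frequently (\<lambda>n. norm (g (s n)) \<le> M) sequentially"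
    using fr by (rule frequently_elim1) (use M in auto)
  hence "\<not> eventually (\<lambda>n. M + 1 \<le> norm (g (s n))) sequentially"
    unfolding frequently_def by (smt (verit, ccfv_SIG) eventually_mono)
  thus ?thesis unfolding filterlim_at_top by blast
qed

lemma one_side:
  fixes f g :: "complex \<Rightarrow> complex"
  assumes "continuous_on UNIV g" "f \<circ> g = g \<circ> f" "property_A_one f g"
  shows "completely_invariant (bungee_set f) g"
proof -
  have it: "(\<lambda>n. (f ^^ n) (g z)) = (\<lambda>n. g ((f ^^ n) z))" for z
    using iter_comm[OF assms(2)] by auto
  have esc: "z \<in> escaping_set f \<longleftrightarrow> filterlim (\<lambda>n. norm ((f ^^ n) z)) at_top sequentially" for z
    unfolding escaping_set_def by (simp add: filterlim_at_infinity_conv_norm_at_top o_def)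
  have escg: "g z \<in> escaping_set f \<longleftrightarrow> filterlim (\<lambda>n. norm (g ((f ^^ n) z))) at_top sequentially" for z
  proof -
    have "g z \<in> escaping_set f \<longleftrightarrow> filterlim (\<lambda>n. norm ((f ^^ n) (g z))) at_top sequentially"
      unfolding escaping_set_def by (simp add: filterlim_at_infinity_conv_norm_at_top o_def)
    also have "(\<lambda>n. norm ((f ^^ n) (g z))) = (\<lambda>n. norm (g ((f ^^ n) z)))"
      using iter_comm[OF assms(2)] by simp
    finally show ?thesis .
  qed
  have filg: "g z \<in> filled_julia_set f \<longleftrightarrow> bounded (range (\<lambda>n. g ((f ^^ n) z)))" for z
    unfolding filled_julia_set_def using iter_comm[OF assms(2)] by simp
  have fil: "z \<in> filled_julia_set f \<longleftrightarrow> bounded (range (\<lambda>n. (f ^^ n) z))" for z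
    unfolding filled_julia_set_def by simp
  have A: "filterlim (\<lambda>k. norm ((f ^^ r k) z)) at_top sequentially \<Longrightarrow> strict_mono r \<Longrightarrow>
      filterlim (\<lambda>k. norm (g ((f ^^ r k) z))) at_top sequentially" for r z
    using assms(3) unfolding property_A_one_def by blast
  have fwd: "g z \<in> bungee_set f" if "z \<in> bungee_set f" for z
  proof -
    from that have ne: "z \<notin> escaping_set f" and nf: "z \<notin> filled_julia_set f"
      unfolding bungee_set_def by auto
    have "g z \<notin> escaping_set f"
      using cont_not_esc[OF assms(1), of "\<lambda>n. (f ^^ n) z"] ne esc[of z] escg[of z] by blast
    moreover have "g z \<notin> filled_julia_set f"
    proof
      assume "g z \<in> filled_julia_set f"
      hence bd: "bounded (range (\<lambda>n. g ((f ^^ n) z)))" using filg by blast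
      from nf obtain r where r: "strict_mono r" "filterlim (\<lambda>k. norm ((f ^^ r k) z)) at_top sequentially"
        using unb_subseq[of "\<lambda>n. (f ^^ n) z"] fil by blast
      have lim: "filterlim (\<lambda>k. norm (g ((f ^^ r k) z))) at_top sequentially" using A r by blast
      from bd obtain M where "\<forall>n. norm (g ((f ^^ n) z)) \<le> M" unfolding bounded_iff by blast
      moreover have "eventually (\<lambda>k. M + 1 \<le> norm (g ((f ^^ r k) z))) sequentially"
        using lim unfolding filterlim_at_top by blast
      then obtain k where "M + 1 \<le> norm (g ((f ^^ r k) z))" using eventually_sequentially by auto
      ultimately show False by (metis add_le_same_cancel1 not_one_le_zero order_trans)
    qed
    ultimately show ?thesis unfolding bungee_set_def by auto
  qed
  have bwd: "z \<in> bungee_set f" if "g z \<in> bungee_set f" for z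
  proof -
    from that have ne: "g z \<notin> escaping_set f" and nf: "g z \<notin> filled_julia_set f"
      unfolding bungee_set_def by auto
    have "z \<notin> escaping_set f"
    proof
      assume "z \<in> escaping_set f"
      hence "filterlim (\<lambda>k. norm ((f ^^ id k) z)) at_top sequentially" using esc by simp
      from A[OF this] have "filterlim (\<lambda>k. norm (g ((f ^^ k) z))) at_top sequentially"
        by (simp add: strict_mono_def)
      thus False using ne escg by blast
    qed
    moreover have "z \<notin> filled_julia_set f"
      using nf cont_bounded[OF assms(1)] fil filg by blast
    ultimately show ?thesis unfolding bungee_set_def by auto
  qed
  show ?thesis unfolding completely_invariant_def using fwd bwd by blast
qed

theorem mainTheorem3:
  fixes f g :: "complex \<Rightarrow> complex"
  assumes "f holomorphic_on UNIV" and "g holomorphic_on UNIV"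
    and "f \<circ> g = g \<circ> f"
    and "property_A f g"
  shows "completely_invariant (bungee_set f) g \<and> completely_invariant (bungee_set g) f"
proof
  show "completely_invariant (bungee_set f) g"
    using one_side[of g f] assms holomorphic_on_imp_continuous_on
    unfolding property_A_def by blast
  show "completely_invariant (bungee_set g) f"
    using one_side[of f g] assms holomorphic_on_imp_continuous_on
    unfolding property_A_def by (metis)
qed

end
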